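(* Let $n \geq s$ be positive integers and let $P_0 > 0$. Let $\mathbf{\Psi}\in\mathbb{C}^{n\times n}$ be positive semi-definite with eigenvalue decomposition $\mathbf{\Psi} = \mathbf{U}_2\mathbf{\Lambda}_2\mathbf{U}_2^H$, where $\mathbf{U}_2$ is unitary and $\mathbf{\Lambda}_2$ is diagonal with diagonal entries $[\mathbf{\Lambda}_2]_{1,1}\geq \cdots \geq [\mathbf{\Lambda}_2]_{n,n}\geq 0$. Let $\mathbf{A}\in\mathbb{C}^{n\times s}$ satisfy $\text{tr}(\mathbf{A}\mathbf{A}^H)\leq P_0$, and let $\mathbf{A}^H\mathbf{\Psi}\mathbf{A}=\mathbf{U}_1\mathbf{\Lambda}_1\mathbf{U}_1^H$ be an eigenvalue decomposition, where $\mathbf{U}_1$ is unitary and $\mathbf{\Lambda}_1$ is diagonal with $[\mathbf{\Lambda}_1]_{1,1}\geq\cdots\geq[\mathbf{\Lambda}_1]_{s,s}\geq 0$. Define $\tilde{\mathbf{p}}\in\mathbb{R}^s$ by $[\tilde{\mathbf{p}}]_i = [\mathbf{\Lambda}_1]_{i,i}/[\mathbf{\Lambda}_2]_{i,i}$ for $i=1,\dots,s$ (with $[\tilde{\mathbf{p}}]_i = 0$ whenever $[\mathbf{\Lambda}_2]_{i,i}=0$), let $\mathbf{P}$ be the real $n\times s$ matrix $\mathbf{P} = \left[ \begin{array}{c} \text{diag}(\tilde{\mathbf{p}}) \\ \mathbf{0}_{(n-s)\times s} \end{array} \right]$, let $\mathbf{P}^{1/2}$ denote the entrywise square root of $\mathbf{P}$,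 and set $\tilde{\mathbf{A}}=\mathbf{U}_2\mathbf{P}^{1/2}$. Then $$\tilde{\mathbf{A}}^H\mathbf{\Psi}\tilde{\mathbf{A}} = \mathbf{\Lambda}_1 \quad \text{and} \quad \text{tr}(\tilde{\mathbf{A}}\tilde{\mathbf{A}}^H)\leq \text{tr}(\mathbf{A}\mathbf{A}^H).$$
   Context: $(\cdot)^H$ denotes conjugate transpose, $\text{tr}$ the trace, and $\text{diag}(\mathbf{x})$ the diagonal matrix whose diagonal entries are the entries of the vector $\mathbf{x}$. *)

theory Defs
  imports "Jordan_Normal_Form.Schur_Decomposition"
begin

text \<open>Conjugate transpose is the library's mat_adjoint.\<close>

definition mtrace :: "'a::comm_ring_1 mat \<Rightarrow> 'a" where
  "mtrace A = (\<Sum>i<dim_row A. A $$ (i, i))"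

definition unitary_mat :: "complex mat \<Rightarrow> nat \<Rightarrow> bool" where
  "unitary_mat U n \<longleftrightarrow> U \<in> carrier_mat n n \<and>
     mat_adjoint U * U = 1\<^sub>m n \<and> U * mat_adjoint U = 1\<^sub>m n"

definition hermitian_mat :: "complex mat \<Rightarrow> bool" where
  "hermitian_mat A \<longleftrightarrow> mat_adjoint A = A"

definition psd_mat :: "complex mat \<Rightarrow> nat \<Rightarrow> bool" where
  "psd_mat A n \<longleftrightarrow> A \<in> carrier_mat n n \<and> hermitian_mat A \<and>
     (\<forall>v \<in> carrier_vec n. Re (conjugate v \<bullet> (A *\<^sub>v v)) \<ge> 0 \<and>
                           Im (conjugate v \<bullet> (A *\<^sub>v v)) = 0)"

definition rdiag :: "nat \<Rightarrow> (nat \<Rightarrow> real) \<Rightarrow> complex mat" where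
  "rdiag n d = mat_diag n (\<lambda>i. complex_of_real (d i))"

end

theory Submission imports Defs begin
lemma mcnj: "z * cnj z = complex_of_real ((cmod z)\<^sup>2)" using complex_norm_square[of z] by simp

lemma adj_dims[simp]: "dim_row (mat_adjoint A) = dim_col A" "dim_col (mat_adjoint A) = dim_row A"
  unfolding mat_adjoint_def by simp_all

lemma adj_carrier[simp]: "A \<in> carrier_mat n m \<Longrightarrow> mat_adjoint A \<in> carrier_mat m n"
  unfolding carrier_mat_def by simp

lemma adj_index[simp]: "i < dim_col A \<Longrightarrow> j < dim_row A \<Longrightarrow> mat_adjoint (A::complex mat) $$ (i,j) = cnj (A $$ (j,i))"
  unfolding mat_adjoint_def by (auto simp: mat_of_rows_def)

lemma adj_mult: assumes "(A::complex mat) \<in> carrier_mat n m" "B \<in> carrier_mat m k"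
  shows "mat_adjoint (A*B) = mat_adjoint B * mat_adjoint A"
  by (rule eq_matI, insert assms, auto simp: scalar_prod_def mult.commute)

lemma adj_adj[simp]: "mat_adjoint (mat_adjoint (A::complex mat)) = A"
  by (rule eq_matI, auto)

lemma rdiag_carrier[simp]: "rdiag n d \<in> carrier_mat n n" unfolding rdiag_def by simp

lemma rdiag_adj[simp]: "mat_adjoint (rdiag n d) = rdiag n d"
  by (rule eq_matI, auto simp: rdiag_def mat_diag_def)

lemma mtrace_comm: assumes "(A::complex mat) \<in> carrier_mat n m" "B \<in> carrier_mat m n"
  shows "mtrace (A*B) = mtrace (B*A)"
proof -
  have "mtrace (A*B) = (\<Sum>i<n. \<Sum>k<m. A$$(i,k) * B$$(k,i))"
    using assms by (auto simp: mtrace_def scalar_prod_def atLeast0LessThan)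
  also have "\<dots> = (\<Sum>k<m. \<Sum>i<n. B$$(k,i) * A$$(i,k))"
    by (subst sum.swap) (simp add: mult.commute)
  also have "\<dots> = mtrace (B*A)"
    using assms by (auto simp: mtrace_def scalar_prod_def atLeast0LessThan)
  finally show ?thesis .
qed

lemma mtrace_AAH: assumes "(A::complex mat) \<in> carrier_mat n m"
  shows "mtrace (A * mat_adjoint A) = of_real (\<Sum>i<n. \<Sum>j<m. (cmod (A$$(i,j)))\<^sup>2)"
  using assms by (auto simp: mtrace_def scalar_prod_def atLeast0LessThan mcnj)

lemma entry_XDY: assumes "(X::complex mat) \<in> carrier_mat n m" "Y \<in> carrier_mat n p" "i < m" "j < p"
  shows "(mat_adjoint X * rdiag n d * Y) $$ (i,j) = (\<Sum>k<n. cnj (X$$(k,i)) * d k * Y$$(k,j))"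
proof -
  have "mat_adjoint X * rdiag n d = Matrix.mat m n (\<lambda>(i,j). mat_adjoint X $$ (i,j) * complex_of_real (d j))"
    unfolding rdiag_def by (rule mat_diag_mult_right) (use assms in auto)
  then show ?thesis using assms by (auto simp: scalar_prod_def atLeast0LessThan)
qed

lemma partial_S:
  fixes y :: "nat \<Rightarrow> real" and M :: "nat \<Rightarrow> nat \<Rightarrow> real"
  assumes "m \<le> s" "s \<le> n"
    and ymono: "\<And>i j. i \<le> j \<Longrightarrow> j < n \<Longrightarrow> y i \<le> y j"
    and Mnn: "\<And>j k. 0 \<le> M j k"
    and rows: "\<And>j. j < m \<Longrightarrow> (\<Sum>k<n. M j k) = 1"
    and cols: "\<And>k. k < n \<Longrightarrow> (\<Sum>j<s. M j k) \<le> 1"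
  shows "(\<Sum>j<m. y j) \<le> (\<Sum>j<m. \<Sum>k<n. y k * M j k)"
proof (cases "m = 0")
  case True then show ?thesis by simp
next
  case False
  define t where "t = y (m - 1)"
  define c where "c k = (\<Sum>j<m. M j k)" for k
  have c1: "c k \<le> 1" if "k < n" for k
  proof -
    have "c k \<le> (\<Sum>j<s. M j k)" unfolding c_def
      by (rule sum_mono2) (use assms Mnn in auto)
    with cols[OF that] show ?thesis by simp
  qed
  have c0: "0 \<le> c k" for k unfolding c_def by (rule sum_nonneg) (use Mnn in auto)
  have csum: "(\<Sum>k<n. c k) = real m"
    unfolding c_def by (subst sum.swap) (simp add: rows)
  have swap: "(\<Sum>j<m. \<Sum>k<n. y k * M j k) = (\<Sum>k<n. y k * c k)"
    unfolding c_def by (subst sum.swap) (simp add: sum_distrib_left)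
  have ym: "(\<Sum>k<n. if k < m then y k else 0) = (\<Sum>k<m. y k)"
  proof -
    have "{..<n} \<inter> {k. k < m} = {..<m}" using assms by auto
    then show ?thesis by (simp add: sum.If_cases)
  qed
  have tm: "0 \<le> (y k - t) * (c k - (if k < m then 1 else 0))" if "k < n" for k
  proof (cases "k < m")
    case True
    then have "y k \<le> t" unfolding t_def using ymono[of k "m-1"] assms that by auto
    with True c1[OF that] show ?thesis by (simp add: mult_nonpos_nonpos)
  next
    case False
    then have "t \<le> y k" unfolding t_def using ymono[of "m-1" k] assms that by auto
    with False c0[of k] show ?thesis by simp
  qed
  have "0 \<le> (\<Sum>k<n. (y k - t) * (c k - (if k < m then 1 else 0)))"
    by (rule sum_nonneg) (use tm in auto)
  also have "\<dots> = (\<Sum>k<n. y k * c k) - (\<Sum>k<n. if k < m then y k else 0)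
                   - t * (\<Sum>k<n. c k) + t * (\<Sum>k<n. if k < m then 1 else 0)"
  proof -
    have "\<And>k. (y k - t) * (c k - (if k < m then 1 else 0)) = y k * c k - (if k < m then y k else 0)
                   - t * c k + t * (if k < m then 1 else 0)" by (simp add: algebra_simps)
    then show ?thesis by (simp only: sum.distrib sum_subtractf sum_distrib_left)
  qed
  also have "(\<Sum>k<n. if k < m then (1::real) else 0) = real m"
  proof -
    have "{..<n} \<inter> {k. k < m} = {..<m}" using assms by auto
    then show ?thesis by (simp add: sum.If_cases)
  qed
  finally show ?thesis using swap ym csum by simp
qed

lemma comb:
  fixes x y :: "nat \<Rightarrow> real" and M :: "nat \<Rightarrow> nat \<Rightarrow> real"
  assumes "s \<le> n"
    and xdec: "\<And>i j. i \<le> j \<Longrightarrow> x j \<le> x i" and xnn: "\<And>j. 0 \<le> x j"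
    and xs: "\<And>j. s \<le> j \<Longrightarrow> x j = 0"
    and ymono: "\<And>i j. i \<le> j \<Longrightarrow> j < n \<Longrightarrow> y i \<le> y j"
    and Mnn: "\<And>j k. 0 \<le> M j k"
    and rows: "\<And>j. j < s \<Longrightarrow> 0 < x j \<Longrightarrow> (\<Sum>k<n. M j k) = 1"
    and cols: "\<And>k. k < n \<Longrightarrow> (\<Sum>j<s. M j k) \<le> 1"
  shows "(\<Sum>j<s. x j * y j) \<le> (\<Sum>j<s. \<Sum>k<n. x j * y k * M j k)"
proof -
  define d where "d j = (\<Sum>k<n. y k * M j k) - y j" for j
  have S: "0 \<le> (\<Sum>j<m. d j)" if "m \<le> s" "0 < x (m - 1)" for m
  proof -
    have "(\<Sum>j<m. y j) \<le> (\<Sum>j<m. \<Sum>k<n. y k * M j k)"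
    proof (rule partial_S[OF that(1) assms(1) ymono Mnn _ cols])
      fix j assume "j < m"
      then have "x (m-1) \<le> x j" using xdec by auto
      with that \<open>j < m\<close> show "(\<Sum>k<n. M j k) = 1" by (intro rows) auto
    qed auto
    then show ?thesis unfolding d_def by (simp add: sum_subtractf)
  qed
  have Q: "x m * (\<Sum>j<m. d j) \<le> (\<Sum>j<m. x j * d j)" if "m \<le> s" for m
    using that
  proof (induction m)
    case 0 then show ?case by simp
  next
    case (Suc m)
    have IH: "x m * (\<Sum>j<m. d j) \<le> (\<Sum>j<m. x j * d j)" using Suc by simp
    have "0 \<le> (x m - x (Suc m)) * (\<Sum>j<Suc m. d j)"
    proof (cases "x m - x (Suc m) = 0")
      case True then show ?thesis by simp
    next
      case False
      then have "x (Suc m) < x m" using xdec[of m "Suc m"] by simp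
      then have "0 < x m" using xnn[of "Suc m"] by simp
      then have "0 \<le> (\<Sum>j<Suc m. d j)" using S[of "Suc m"] Suc.prems by simp
      then show ?thesis using \<open>x (Suc m) < x m\<close> by simp
    qed
    then have "x (Suc m) * (\<Sum>j<Suc m. d j) \<le> x m * (\<Sum>j<Suc m. d j)"
      by (simp add: algebra_simps)
    also have "\<dots> = x m * (\<Sum>j<m. d j) + x m * d m" by (simp add: algebra_simps)
    also have "\<dots> \<le> (\<Sum>j<Suc m. x j * d j)" using IH by simp
    finally show ?case .
  qed
  have "0 \<le> (\<Sum>j<s. x j * d j)" using Q[of s] xs[of s] by simp
  also have "(\<Sum>j<s. x j * d j) = (\<Sum>j<s. \<Sum>k<n. x j * y k * M j k) - (\<Sum>j<s. x j * y j)"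
    unfolding d_def by (simp add: algebra_simps sum_subtractf sum_distrib_left)
  finally show ?thesis by simp
qed


lemma entry_XHY: assumes "(X::complex mat) \<in> carrier_mat n m" "Y \<in> carrier_mat n p" "i < m" "j < p"
  shows "(mat_adjoint X * Y) $$ (i,j) = (\<Sum>k<n. cnj (X$$(k,i)) * Y$$(k,j))"
  using assms by (auto simp: scalar_prod_def atLeast0LessThan)

lemma entry_XYH: assumes "(X::complex mat) \<in> carrier_mat n m" "Y \<in> carrier_mat p m" "i < n" "j < p"
  shows "(X * mat_adjoint Y) $$ (i,j) = (\<Sum>k<m. X$$(i,k) * cnj (Y$$(j,k)))"
  using assms by (auto simp: scalar_prod_def atLeast0LessThan)

lemma bessel:
  assumes E: "(E::complex mat) \<in> carrier_mat n s" and idem: "E * (mat_adjoint E * E) = E" and k: "k < n"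
  shows "(\<Sum>j<s. (cmod (E$$(k,j)))\<^sup>2) \<le> 1"
proof -
  define P where "P = E * mat_adjoint E"
  have EH: "mat_adjoint E \<in> carrier_mat s n" using E by simp
  have cP: "P \<in> carrier_mat n n" unfolding P_def using E EH by simp
  have PP: "P * P = P"
  proof -
    have "P * P = E * (mat_adjoint E * (E * mat_adjoint E))"
      unfolding P_def by (subst assoc_mult_mat[of E n s _ n _ n]) (use E EH in auto)
    also have "mat_adjoint E * (E * mat_adjoint E) = (mat_adjoint E * E) * mat_adjoint E"
      by (subst assoc_mult_mat[of _ s n _ s _ n]) (use E EH in auto)
    also have "E * ((mat_adjoint E * E) * mat_adjoint E) = (E * (mat_adjoint E * E)) * mat_adjoint E"
      by (subst assoc_mult_mat[of E n s _ s _ n]) (use E EH in auto)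
    finally show ?thesis using idem unfolding P_def by simp
  qed
  define c where "c = (\<Sum>j<s. (cmod (E$$(k,j)))\<^sup>2)"
  have c0: "0 \<le> c" unfolding c_def by (simp add: sum_nonneg)
  have Pkk: "P $$ (k,k) = of_real c"
    unfolding P_def c_def using entry_XYH[OF E E k k] by (simp add: mcnj)
  have Pcnj: "P $$ (i,k) = cnj (P $$ (k,i))" if "i < n" for i
    unfolding P_def using entry_XYH[OF E E k that] entry_XYH[OF E E that k]
    by (simp add: mult.commute)
  have "(P * P) $$ (k,k) = (\<Sum>i<n. P$$(k,i) * P$$(i,k))"
    using cP k by (auto simp: scalar_prod_def atLeast0LessThan)
  also have "\<dots> = (\<Sum>i<n. of_real ((cmod (P$$(k,i)))\<^sup>2))"
    by (rule sum.cong) (auto simp: Pcnj mcnj)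
  finally have "of_real c = (of_real (\<Sum>i<n. (cmod (P$$(k,i)))\<^sup>2) :: complex)"
    using PP Pkk by simp
  then have ceq: "c = (\<Sum>i<n. (cmod (P$$(k,i)))\<^sup>2)" by (simp only: of_real_eq_iff)
  have "(cmod (P$$(k,k)))\<^sup>2 \<le> (\<Sum>i<n. (cmod (P$$(k,i)))\<^sup>2)"
    by (rule member_le_sum) (use k in auto)
  note le = this
  have m: "cmod (P$$(k,k)) = c" using Pkk c0 by simp
  have "c\<^sup>2 \<le> c" using le unfolding m ceq[symmetric] .
  show ?thesis unfolding c_def[symmetric]
  proof (rule ccontr)
    assume "\<not> c \<le> 1"
    then have "1 * c < c * c" by (intro mult_strict_right_mono) auto
    with \<open>c\<^sup>2 \<le> c\<close> show False by (simp add: power2_eq_square)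
  qed
qed

lemma rdiag_dims[simp]: "dim_row (rdiag n d) = n" "dim_col (rdiag n d) = n"
  unfolding rdiag_def mat_diag_def by simp_all

lemma rdiag_index: "i < n \<Longrightarrow> j < n \<Longrightarrow> rdiag n d $$ (i,j) = (if i = j then complex_of_real (d i) else 0)"
  unfolding rdiag_def mat_diag_def by simp

lemma core:
  fixes B :: "complex mat" and l1 l2 :: "nat \<Rightarrow> real"
  assumes cB: "B \<in> carrier_mat n s" and sn: "s \<le> n"
    and l2dec: "\<And>i j. i \<le> j \<Longrightarrow> j < n \<Longrightarrow> l2 j \<le> l2 i" and l2nn: "\<And>i. i < n \<Longrightarrow> 0 \<le> l2 i"
    and l1dec: "\<And>i j. i \<le> j \<Longrightarrow> j < s \<Longrightarrow> l1 j \<le> l1 i" and l1nn: "\<And>i. i < s \<Longrightarrow> 0 \<le> l1 i"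
    and eq: "mat_adjoint B * rdiag n l2 * B = rdiag s l1"
  shows "(\<forall>i<s. l2 i = 0 \<longrightarrow> l1 i = 0) \<and>
         (\<Sum>j<s. if l2 j = 0 then 0 else l1 j / l2 j) \<le> (\<Sum>k<n. \<Sum>j<s. (cmod (B$$(k,j)))\<^sup>2)"
proof -
  define N where "N = (\<Sum>k<n. \<Sum>j<s. (cmod (B$$(k,j)))\<^sup>2)"
  define dinv where "dinv j = (if 0 < l1 j then 1 / sqrt (l1 j) else 0)" for j
  define E where "E = Matrix.mat n s (\<lambda>(k,j). complex_of_real (sqrt (l2 k) * dinv j) * B$$(k,j))"
  have cE: "E \<in> carrier_mat n s" unfolding E_def by simp
  have Eent: "E$$(k,j) = complex_of_real (sqrt (l2 k) * dinv j) * B$$(k,j)" if "k < n" "j < s" for k j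
    unfolding E_def using that by simp
  have gram: "(\<Sum>k<n. cnj (B$$(k,i)) * complex_of_real (l2 k) * B$$(k,j)) = (if i = j then complex_of_real (l1 i) else 0)"
    if "i < s" "j < s" for i j
    using entry_XDY[OF cB cB that, of l2] eq rdiag_index[OF that, of l1] by simp
  define ind where "ind j = (if 0 < l1 j then 1 else (0::real))" for j
  have dl: "dinv j * dinv j * l1 j = ind j" for j
    unfolding dinv_def ind_def by (auto simp: field_simps)
  have EHE: "mat_adjoint E * E = rdiag s ind"
  proof (rule eq_matI)
    fix i j assume i: "i < dim_row (rdiag s ind)" and j: "j < dim_col (rdiag s ind)"
    then have i': "i < s" and j': "j < s" by simp_all
    have "(mat_adjoint E * E) $$ (i,j) = (\<Sum>k<n. cnj (E$$(k,i)) * E$$(k,j))"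
      by (rule entry_XHY[OF cE cE i' j'])
    also have "\<dots> = (\<Sum>k<n. complex_of_real (dinv i * dinv j) * (cnj (B$$(k,i)) * complex_of_real (l2 k) * B$$(k,j)))"
    proof (rule sum.cong)
      fix k assume "k \<in> {..<n}"
      then have k: "k < n" by simp
      have "sqrt (l2 k) * sqrt (l2 k) = l2 k" using l2nn[OF k] by simp
      then have "complex_of_real (sqrt (l2 k)) * complex_of_real (sqrt (l2 k)) = complex_of_real (l2 k)"
        by (metis of_real_mult)
      then show "cnj (E$$(k,i)) * E$$(k,j) = complex_of_real (dinv i * dinv j) * (cnj (B$$(k,i)) * complex_of_real (l2 k) * B$$(k,j))"
        using Eent[OF k i'] Eent[OF k j'] by (simp add: algebra_simps)
    qed simp
    also have "\<dots> = complex_of_real (dinv i * dinv j) * (if i = j then complex_of_real (l1 i) else 0)"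
      by (simp add: sum_distrib_left[symmetric] gram[OF i' j'])
    also have "\<dots> = rdiag s ind $$ (i,j)"
      using rdiag_index[OF i' j', of ind] dl[of i] dl[of j] by (simp del: of_real_mult add: of_real_mult[symmetric])
    finally show "(mat_adjoint E * E) $$ (i,j) = rdiag s ind $$ (i,j)" .
  qed (use cE in simp_all)
  have idem: "E * (mat_adjoint E * E) = E"
  proof -
    have "E * (mat_adjoint E * E) = Matrix.mat n s (\<lambda>(k,j). E $$ (k,j) * complex_of_real (ind j))"
      unfolding EHE rdiag_def by (rule mat_diag_mult_right[OF cE])
    also have "\<dots> = E"
    proof (rule eq_matI)
      fix k j assume "k < dim_row E" "j < dim_col E"
      then have k: "k < n" and j: "j < s" using cE by auto
      show "Matrix.mat n s (\<lambda>(k,j). E $$ (k,j) * complex_of_real (ind j)) $$ (k,j) = E $$ (k,j)"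
        using k j Eent[OF k j] by (auto simp: ind_def dinv_def)
    qed (use cE in auto)
    finally show ?thesis .
  qed
  define M where "M j k = (if j < s \<and> k < n then (cmod (E$$(k,j)))\<^sup>2 else 0)" for j k
  have Mnn: "0 \<le> M j k" for j k unfolding M_def by simp
  have Ment: "M j k = l2 k * (dinv j * dinv j) * (cmod (B$$(k,j)))\<^sup>2" if "j < s" "k < n" for j k
  proof -
    have "M j k = (cmod (complex_of_real (sqrt (l2 k) * dinv j)) * cmod (B$$(k,j)))\<^sup>2"
      unfolding M_def using that Eent[OF that(2,1)] by (simp add: norm_mult)
    also have "\<dots> = (sqrt (l2 k))\<^sup>2 * (dinv j)\<^sup>2 * (cmod (B$$(k,j)))\<^sup>2"
      by (simp only: norm_of_real power_mult_distrib power2_abs)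
    also have "\<dots> = l2 k * (dinv j * dinv j) * (cmod (B$$(k,j)))\<^sup>2"
      using l2nn[OF that(2)] by (simp add: power2_eq_square)
    finally show ?thesis .
  qed
  have cols: "(\<Sum>j<s. M j k) \<le> 1" if k: "k < n" for k
  proof -
    have "(\<Sum>j<s. M j k) = (\<Sum>j<s. (cmod (E$$(k,j)))\<^sup>2)" unfolding M_def using k by simp
    also have "\<dots> \<le> 1" by (rule bessel[OF cE idem k])
    finally show ?thesis .
  qed
  have rows: "(\<Sum>k<n. M j k) = 1" if j: "j < s" and pos: "0 < l1 j" for j
  proof -
    have "complex_of_real (\<Sum>k<n. l2 k * (cmod (B$$(k,j)))\<^sup>2) = (\<Sum>k<n. cnj (B$$(k,j)) * complex_of_real (l2 k) * B$$(k,j))"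
    proof -
      have eqk: "\<And>k. cnj (B$$(k,j)) * complex_of_real (l2 k) * B$$(k,j) = complex_of_real (l2 k * (cmod (B$$(k,j)))\<^sup>2)"
      proof -
        fix k
        have "cnj (B$$(k,j)) * complex_of_real (l2 k) * B$$(k,j) = complex_of_real (l2 k) * (B$$(k,j) * cnj (B$$(k,j)))"
          by (simp add: algebra_simps)
        then show "cnj (B$$(k,j)) * complex_of_real (l2 k) * B$$(k,j) = complex_of_real (l2 k * (cmod (B$$(k,j)))\<^sup>2)"
          by (simp only: mcnj of_real_mult)
      qed
      show ?thesis by (simp only: of_real_sum eqk)
    qed
    also have "\<dots> = complex_of_real (l1 j)" using gram[OF j j] by simp
    finally have s1: "(\<Sum>k<n. l2 k * (cmod (B$$(k,j)))\<^sup>2) = l1 j" by (simp only: of_real_eq_iff)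
    have "(\<Sum>k<n. M j k) = (dinv j * dinv j) * (\<Sum>k<n. l2 k * (cmod (B$$(k,j)))\<^sup>2)"
      by (simp add: Ment[OF j] sum_distrib_left algebra_simps)
    also have "\<dots> = 1" using s1 dl[of j] pos by (simp add: ind_def)
    finally show ?thesis .
  qed
  define y where "y Y k = (if l2 k = 0 then Y else 1 / l2 k)" for Y k
  have main: "(\<Sum>j<s. l1 j * y Y j) \<le> N" if Ybig: "\<And>k. k < n \<Longrightarrow> l2 k \<noteq> 0 \<Longrightarrow> 1 / l2 k \<le> Y" for Y
  proof -
    define x where "x j = (if j < s then l1 j else 0)" for j
    have "(\<Sum>j<s. x j * y Y j) \<le> (\<Sum>j<s. \<Sum>k<n. x j * y Y k * M j k)"
    proof (rule comb[OF sn _ _ _ _ Mnn _ cols])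
      show "x j \<le> x i" if "i \<le> j" for i j
        using that l1dec[of i j] l1nn[of i] unfolding x_def by auto
      show "0 \<le> x j" for j using l1nn unfolding x_def by auto
      show "x j = 0" if "s \<le> j" for j using that unfolding x_def by auto
      show "y Y i \<le> y Y j" if "i \<le> j" "j < n" for i j
      proof -
        have lj: "l2 j \<le> l2 i" using l2dec that by auto
        have pj: "0 \<le> l2 j" using l2nn that by auto
        show ?thesis
        proof (cases "l2 j = 0")
          case True
          then show ?thesis unfolding y_def using Ybig[of i] that by auto
        next
          case False
          then have "0 < l2 j" using pj by simp
          then have "l2 i \<noteq> 0" using lj by auto
          then show ?thesis unfolding y_def using False \<open>0 < l2 j\<close> lj
            by (simp add: frac_le)
        qed
      qed
      show "(\<Sum>k<n. M j k) = 1" if "j < s" "0 < x j" for j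
        using rows[of j] that unfolding x_def by simp
    qed
    also have "\<dots> \<le> (\<Sum>j<s. \<Sum>k<n. (cmod (B$$(k,j)))\<^sup>2)"
    proof (rule sum_mono, rule sum_mono)
      fix j k assume "j \<in> {..<s}" "k \<in> {..<n}"
      then have j: "j < s" and k: "k < n" by auto
      show "x j * y Y k * M j k \<le> (cmod (B$$(k,j)))\<^sup>2"
      proof (cases "0 < l1 j \<and> l2 k \<noteq> 0")
        case True
        then have "x j * y Y k * M j k = (dinv j * dinv j * l1 j) * (l2 k * (1 / l2 k)) * (cmod (B$$(k,j)))\<^sup>2"
          unfolding x_def y_def using j Ment[OF j k] by (simp add: algebra_simps)
        also have "\<dots> = (cmod (B$$(k,j)))\<^sup>2" using True dl[of j] unfolding ind_def by simp
        finally show ?thesis by simp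
      next
        case False
        have "x j * y Y k * M j k = 0"
        proof (cases "0 < l1 j")
          case False
          assume "\<not> 0 < l1 j"
          then have "l1 j = 0" using l1nn[OF j] by simp
          then show ?thesis unfolding x_def by simp
        next
          case True
          with False have "\<not> l2 k \<noteq> 0" by simp
          then show ?thesis using Ment[OF j k] by simp
        qed
        then show ?thesis by (simp only:) simp
      qed
    qed
    also have "\<dots> = N" unfolding N_def by (rule sum.swap)
    finally show ?thesis unfolding x_def by simp
  qed
  define Y0 where "Y0 = (\<Sum>k<n. if l2 k = 0 then 0 else 1 / l2 k)"
  have Y0nn: "0 \<le> Y0" unfolding Y0_def by (rule sum_nonneg) (use l2nn in auto)
  have Y0big: "1 / l2 k \<le> Y0" if "k < n" "l2 k \<noteq> 0" for k
  proof -
    have "(if l2 k = 0 then 0 else 1 / l2 k) \<le> Y0" unfolding Y0_def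
      by (rule member_le_sum) (use that l2nn in auto)
    then show ?thesis using that by simp
  qed
  have ynn: "0 \<le> y Y j" if "0 \<le> Y" "j < n" for Y j
    unfolding y_def using that l2nn by auto
  have part1: "\<forall>i<s. l2 i = 0 \<longrightarrow> l1 i = 0"
  proof (intro allI impI, rule ccontr)
    fix i assume i: "i < s" and z: "l2 i = 0" and nz: "l1 i \<noteq> 0"
    then have pos: "0 < l1 i" using l1nn[OF i] by simp
    define Y where "Y = max Y0 ((N + 1) / l1 i)"
    have "(\<Sum>j<s. l1 j * y Y j) \<le> N" by (rule main) (use Y0big in \<open>force simp: Y_def\<close>)
    moreover have "l1 i * y Y i \<le> (\<Sum>j<s. l1 j * y Y j)"
      by (rule member_le_sum) (use i l1nn ynn Y0nn sn in \<open>auto simp: Y_def\<close>)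
    moreover have "N + 1 \<le> l1 i * y Y i"
    proof -
      have "(N + 1) / l1 i \<le> Y" unfolding Y_def by simp
      then have "N + 1 \<le> Y * l1 i" using pos by (simp add: divide_le_eq)
      then show ?thesis using z unfolding y_def by (simp add: mult.commute)
    qed
    ultimately show False by simp
  qed
  have "(\<Sum>j<s. if l2 j = 0 then 0 else l1 j / l2 j) \<le> (\<Sum>j<s. l1 j * y Y0 j)"
  proof (rule sum_mono)
    fix j assume "j \<in> {..<s}"
    then have j: "j < s" by simp
    show "(if l2 j = 0 then 0 else l1 j / l2 j) \<le> l1 j * y Y0 j"
      unfolding y_def using l1nn[OF j] Y0nn by auto
  qed
  also have "\<dots> \<le> N" by (rule main) (use Y0big in auto)
  finally show ?thesis using part1 unfolding N_def by simp
qed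

lemma conj_form:
  assumes U: "(U::complex mat) \<in> carrier_mat n n" and D: "D \<in> carrier_mat n n" and X: "X \<in> carrier_mat n m"
  shows "mat_adjoint X * (U * D * mat_adjoint U) * X = mat_adjoint (mat_adjoint U * X) * D * (mat_adjoint U * X)"
proof -
  have Uh: "mat_adjoint U \<in> carrier_mat n n" and Xh: "mat_adjoint X \<in> carrier_mat m n" using U X by auto
  have UD: "U * D \<in> carrier_mat n n" using U D by simp
  have UDUh: "U * D * mat_adjoint U \<in> carrier_mat n n" using UD Uh by simp
  have UhX: "mat_adjoint U * X \<in> carrier_mat n m" using Uh X by simp
  have DUhX: "D * (mat_adjoint U * X) \<in> carrier_mat n m" using D UhX by simp
  have XhU: "mat_adjoint X * U \<in> carrier_mat m n" using Xh U by simp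
  have "mat_adjoint (mat_adjoint U * X) = mat_adjoint X * U" using adj_mult[OF Uh X] by simp
  moreover have "mat_adjoint X * (U * D * mat_adjoint U) * X = mat_adjoint X * (U * (D * (mat_adjoint U * X)))"
    by (simp only: assoc_mult_mat[OF Xh UDUh X] assoc_mult_mat[OF UD Uh X] assoc_mult_mat[OF U D UhX])
  moreover have "mat_adjoint X * U * D * (mat_adjoint U * X) = mat_adjoint X * (U * (D * (mat_adjoint U * X)))"
    by (simp only: assoc_mult_mat[OF XhU D UhX] assoc_mult_mat[OF Xh U DUhX])
  ultimately show ?thesis by simp
qed

lemma sandwich:
  assumes C: "(C::complex mat) \<in> carrier_mat n s" and D: "D \<in> carrier_mat n n" and V: "V \<in> carrier_mat s s"
  shows "mat_adjoint (C * V) * D * (C * V) = mat_adjoint V * (mat_adjoint C * D * C) * V"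
proof -
  have Vh: "mat_adjoint V \<in> carrier_mat s s" and Ch: "mat_adjoint C \<in> carrier_mat s n" using V C by auto
  have CV: "C * V \<in> carrier_mat n s" using C V by simp
  have DCV: "D * (C * V) \<in> carrier_mat n s" using D CV by simp
  have VhCh: "mat_adjoint V * mat_adjoint C \<in> carrier_mat s n" using Vh Ch by simp
  have ChD: "mat_adjoint C * D \<in> carrier_mat s n" using Ch D by simp
  have G: "mat_adjoint C * D * C \<in> carrier_mat s s" using ChD C by simp
  have "mat_adjoint (C * V) = mat_adjoint V * mat_adjoint C" by (rule adj_mult[OF C V])
  moreover have "mat_adjoint V * mat_adjoint C * D * (C * V) = mat_adjoint V * (mat_adjoint C * (D * (C * V)))"
    by (simp only: assoc_mult_mat[OF VhCh D CV] assoc_mult_mat[OF Vh Ch DCV])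
  moreover have "mat_adjoint V * (mat_adjoint C * D * C) * V = mat_adjoint V * (mat_adjoint C * (D * (C * V)))"
    by (simp only: assoc_mult_mat[OF Vh G V] assoc_mult_mat[OF ChD C V] assoc_mult_mat[OF Ch D CV])
  ultimately show ?thesis by simp
qed

lemma unit_cancel:
  assumes V: "(V::complex mat) \<in> carrier_mat s s" and D: "D \<in> carrier_mat s s"
    and u: "mat_adjoint V * V = 1\<^sub>m s"
  shows "mat_adjoint V * (V * D * mat_adjoint V) * V = D"
proof -
  have Vh: "mat_adjoint V \<in> carrier_mat s s" using V by auto
  have VD: "V * D \<in> carrier_mat s s" using V D by simp
  have VDVh: "V * D * mat_adjoint V \<in> carrier_mat s s" using VD Vh by simp
  have "mat_adjoint V * (V * D * mat_adjoint V) * V = mat_adjoint V * (V * D * (mat_adjoint V * V))"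
    by (simp only: assoc_mult_mat[OF Vh VDVh V] assoc_mult_mat[OF VD Vh V])
  also have "\<dots> = mat_adjoint V * (V * D)" using u right_mult_one_mat[OF VD] by simp
  also have "\<dots> = (mat_adjoint V * V) * D" by (simp only: assoc_mult_mat[OF Vh V D])
  also have "\<dots> = D" using u D by simp
  finally show ?thesis .
qed

lemma utrace_left:
  assumes U: "(U::complex mat) \<in> carrier_mat n n" and X: "X \<in> carrier_mat n m"
    and u: "mat_adjoint U * U = 1\<^sub>m n"
  shows "mtrace ((U * X) * mat_adjoint (U * X)) = mtrace (X * mat_adjoint X)"
proof -
  have Uh: "mat_adjoint U \<in> carrier_mat n n" and Xh: "mat_adjoint X \<in> carrier_mat m n" using U X by auto
  have XXh: "X * mat_adjoint X \<in> carrier_mat n n" using X Xh by simp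
  have XhUh: "mat_adjoint X * mat_adjoint U \<in> carrier_mat m n" using Xh Uh by simp
  have "(U * X) * mat_adjoint (U * X) = U * ((X * mat_adjoint X) * mat_adjoint U)"
    by (simp only: adj_mult[OF U X] assoc_mult_mat[OF U X XhUh]
        assoc_mult_mat[OF X Xh Uh])
  then have "mtrace ((U * X) * mat_adjoint (U * X)) = mtrace (((X * mat_adjoint X) * mat_adjoint U) * U)"
    using mtrace_comm[OF U mult_carrier_mat[OF XXh Uh]] by simp
  also have "((X * mat_adjoint X) * mat_adjoint U) * U = X * mat_adjoint X"
    using assoc_mult_mat[OF XXh Uh U] u right_mult_one_mat[OF XXh] by simp
  finally show ?thesis .
qed

lemma utrace_right:
  assumes V: "(V::complex mat) \<in> carrier_mat m m" and X: "X \<in> carrier_mat n m"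
    and u: "V * mat_adjoint V = 1\<^sub>m m"
  shows "mtrace ((X * V) * mat_adjoint (X * V)) = mtrace (X * mat_adjoint X)"
proof -
  have Vh: "mat_adjoint V \<in> carrier_mat m m" and Xh: "mat_adjoint X \<in> carrier_mat m n" using V X by auto
  have VhXh: "mat_adjoint V * mat_adjoint X \<in> carrier_mat m n" using Vh Xh by simp
  have "(X * V) * mat_adjoint (X * V) = X * ((V * mat_adjoint V) * mat_adjoint X)"
    by (simp only: adj_mult[OF X V] assoc_mult_mat[OF X V VhXh]
        assoc_mult_mat[OF V Vh Xh])
  also have "\<dots> = X * mat_adjoint X" using u left_mult_one_mat[OF Xh] by simp
  finally show ?thesis by simp
qed


theorem theorem1:
  fixes n s :: nat and P0 :: real
    and Psi U2 A U1 :: "complex mat"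
    and l2 l1 :: "nat \<Rightarrow> real"
  assumes "0 < s" and "s \<le> n" and "P0 > 0"
    and "psd_mat Psi n"
    and "unitary_mat U2 n"
    and "\<And>i j. i \<le> j \<Longrightarrow> j < n \<Longrightarrow> l2 j \<le> l2 i"
    and "\<And>i. i < n \<Longrightarrow> 0 \<le> l2 i"
    and "Psi = U2 * rdiag n l2 * mat_adjoint U2"
    and "A \<in> carrier_mat n s"
    and "Re (mtrace (A * mat_adjoint A)) \<le> P0"
    and "unitary_mat U1 s"
    and "\<And>i j. i \<le> j \<Longrightarrow> j < s \<Longrightarrow> l1 j \<le> l1 i"
    and "\<And>i. i < s \<Longrightarrow> 0 \<le> l1 i"
    and "mat_adjoint A * Psi * A = U1 * rdiag s l1 * mat_adjoint U1"
  shows "let p = (\<lambda>i. if l2 i = 0 then 0 else l1 i / l2 i);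
             P = mat n s (\<lambda>(i, j). if i = j then p j else (0::real));
             Phalf = map_mat sqrt P;
             At = U2 * map_mat complex_of_real Phalf
         in mat_adjoint At * Psi * At = rdiag s l1 \<and>
            Re (mtrace (At * mat_adjoint At)) \<le> Re (mtrace (A * mat_adjoint A))"
proof -
  note sn = assms(2) and l2dec = assms(6) and l2nn = assms(7) and Psi = assms(8) and cA = assms(9)
  note l1dec = assms(12) and l1nn = assms(13) and hyp = assms(14)
  have cU2: "U2 \<in> carrier_mat n n" and u2a: "mat_adjoint U2 * U2 = 1\<^sub>m n" and u2b: "U2 * mat_adjoint U2 = 1\<^sub>m n"
    using assms(5) unfolding unitary_mat_def by auto
  have cU1: "U1 \<in> carrier_mat s s" and u1a: "mat_adjoint U1 * U1 = 1\<^sub>m s" and u1b: "U1 * mat_adjoint U1 = 1\<^sub>m s"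
    using assms(11) unfolding unitary_mat_def by auto
  have cD2: "rdiag n l2 \<in> carrier_mat n n" and cD1: "rdiag s l1 \<in> carrier_mat s s" by simp_all
  have cUh: "mat_adjoint U2 \<in> carrier_mat n n" using cU2 by simp
  define C where "C = mat_adjoint U2 * A"
  define B where "B = C * U1"
  have cC: "C \<in> carrier_mat n s" unfolding C_def using cUh cA by simp
  have cB: "B \<in> carrier_mat n s" unfolding B_def using cC cU1 by simp
  have F0: "mat_adjoint C * rdiag n l2 * C = U1 * rdiag s l1 * mat_adjoint U1"
    using hyp conj_form[OF cU2 cD2 cA] unfolding Psi C_def by simp
  have F1: "mat_adjoint B * rdiag n l2 * B = rdiag s l1"
    unfolding B_def sandwich[OF cC cD2 cU1] F0 by (rule unit_cancel[OF cU1 cD1 u1a])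
  have F2: "mtrace (B * mat_adjoint B) = mtrace (A * mat_adjoint A)"
    unfolding B_def utrace_right[OF cU1 cC u1b] unfolding C_def
    by (rule utrace_left[OF cUh cA]) (use u2b in simp)
  have core: "(\<forall>i<s. l2 i = 0 \<longrightarrow> l1 i = 0) \<and>
         (\<Sum>j<s. if l2 j = 0 then 0 else l1 j / l2 j) \<le> (\<Sum>k<n. \<Sum>j<s. (cmod (B$$(k,j)))\<^sup>2)"
    by (rule core[OF cB sn l2dec l2nn l1dec l1nn F1])
  have NB: "(\<Sum>k<n. \<Sum>j<s. (cmod (B$$(k,j)))\<^sup>2) = Re (mtrace (A * mat_adjoint A))"
  proof -
    have "mtrace (A * mat_adjoint A) = complex_of_real (\<Sum>k<n. \<Sum>j<s. (cmod (B$$(k,j)))\<^sup>2)"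
      using F2 mtrace_AAH[OF cB] by metis
    then show ?thesis by (simp only: Re_complex_of_real)
  qed
  define p where "p = (\<lambda>i. if l2 i = 0 then 0 else l1 i / l2 i)"
  define Ph where "Ph = map_mat complex_of_real (map_mat sqrt (Matrix.mat n s (\<lambda>(i, j). if i = j then p j else (0::real))))"
  define At where "At = U2 * Ph"
  have pnn: "0 \<le> p j" if "j < s" for j
    unfolding p_def using l1nn[OF that] l2nn[of j] that sn by auto
  have pl: "p i * l2 i = l1 i" if "i < s" for i
    using core that unfolding p_def by auto
  have cPh: "Ph \<in> carrier_mat n s" unfolding Ph_def by simp
  have Phent: "Ph $$ (k,j) = (if k = j then complex_of_real (sqrt (p j)) else 0)" if "k < n" "j < s" for k j
    unfolding Ph_def using that by simp
  have res1: "mat_adjoint At * Psi * At = rdiag s l1"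
  proof -
    have cAt: "At \<in> carrier_mat n s" unfolding At_def using cU2 cPh by simp
    have UhAt: "mat_adjoint U2 * At = Ph"
      unfolding At_def by (simp only: assoc_mult_mat[OF cUh cU2 cPh, symmetric] u2a left_mult_one_mat[OF cPh])
    have "mat_adjoint At * Psi * At = mat_adjoint (mat_adjoint U2 * At) * rdiag n l2 * (mat_adjoint U2 * At)"
      unfolding Psi by (rule conj_form[OF cU2 cD2 cAt])
    also have "\<dots> = mat_adjoint Ph * rdiag n l2 * Ph" by (simp only: UhAt)
    also have "\<dots> = rdiag s l1"
    proof (rule eq_matI)
      fix i j assume "i < dim_row (rdiag s l1)" "j < dim_col (rdiag s l1)"
      then have i: "i < s" and j: "j < s" by simp_all
      have "(mat_adjoint Ph * rdiag n l2 * Ph) $$ (i,j) = (\<Sum>k<n. cnj (Ph$$(k,i)) * complex_of_real (l2 k) * Ph$$(k,j))"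
        by (rule entry_XDY[OF cPh cPh i j])
      also have "\<dots> = (\<Sum>k<n. if k = i then (if i = j then complex_of_real (l1 i) else 0) else 0)"
      proof (rule sum.cong)
        fix k assume "k \<in> {..<n}"
        then have k: "k < n" by simp
        have "sqrt (p i) * l2 i * sqrt (p i) = l1 i"
        proof -
          have "sqrt (p i) * sqrt (p i) = p i" using pnn[OF i] by simp
          moreover have "sqrt (p i) * l2 i * sqrt (p i) = (sqrt (p i) * sqrt (p i)) * l2 i" by (simp only: mult_ac)
          ultimately show ?thesis using pl[OF i] by simp
        qed
        then have "complex_of_real (sqrt (p i)) * complex_of_real (l2 i) * complex_of_real (sqrt (p i)) = complex_of_real (l1 i)"
          by (metis of_real_mult)
        then show "cnj (Ph$$(k,i)) * complex_of_real (l2 k) * Ph$$(k,j) = (if k = i then (if i = j then complex_of_real (l1 i) else 0) else 0)"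
          unfolding Phent[OF k i] Phent[OF k j] by auto
      qed simp
      also have "\<dots> = (if i = j then complex_of_real (l1 i) else 0)"
        by (subst sum.delta) (use i sn in simp_all)
      also have "\<dots> = rdiag s l1 $$ (i,j)" using rdiag_index[OF i j] by simp
      finally show "(mat_adjoint Ph * rdiag n l2 * Ph) $$ (i,j) = rdiag s l1 $$ (i,j)" .
    qed (use cPh in simp_all)
    finally show ?thesis .
  qed
  have res2: "Re (mtrace (At * mat_adjoint At)) \<le> Re (mtrace (A * mat_adjoint A))"
  proof -
    have "mtrace (At * mat_adjoint At) = mtrace (Ph * mat_adjoint Ph)"
      unfolding At_def by (rule utrace_left[OF cU2 cPh u2a])
    also have "\<dots> = complex_of_real (\<Sum>k<n. \<Sum>j<s. (cmod (Ph$$(k,j)))\<^sup>2)" by (rule mtrace_AAH[OF cPh])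
    also have "(\<Sum>k<n. \<Sum>j<s. (cmod (Ph$$(k,j)))\<^sup>2) = (\<Sum>k<n. \<Sum>j<s. if k = j then p j else 0)"
    proof (intro sum.cong refl)
      fix k j assume "k \<in> {..<n}" "j \<in> {..<s}"
      then have k: "k < n" and j: "j < s" by auto
      show "(cmod (Ph$$(k,j)))\<^sup>2 = (if k = j then p j else 0)"
        using Phent[OF k j] pnn[OF j] by simp
    qed
    also have "\<dots> = (\<Sum>j<s. \<Sum>k<n. if k = j then p j else 0)" by (rule sum.swap)
    also have "\<dots> = (\<Sum>j<s. p j)"
      by (rule sum.cong) (use sn in auto)
    finally have "Re (mtrace (At * mat_adjoint At)) = (\<Sum>j<s. p j)" by simp
    also have "\<dots> \<le> Re (mtrace (A * mat_adjoint A))" using core NB unfolding p_def by simp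
    finally show ?thesis .
  qed
  show ?thesis unfolding Let_def using res1 res2 unfolding At_def Ph_def p_def by (rule conjI)
qed

end
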